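(* Consider the delay differential system \[ \begin{aligned} \dot T(t)&= s-dT(t)+aT(t)\Big(1-\frac{T(t)+I(t)}{T_{\max}}\Big)-\frac{bT(t)V(t)}{1+\alpha V(t)},\\ \dot I(t)&= \frac{bT(t-\tau)V(t-\tau)}{1+\alpha V(t-\tau)}+aI(t)\Big(1-\frac{T(t)+I(t)}{T_{\max}}\Big)-\mu I(t),\\ \dot V(t)&= pI(t)-cV(t), \end{aligned} \] with positive constants $s,d,a,T_{\max},b,\alpha,\mu,p,c$ and $\tau\ge0$. Let \[ T_0=\frac{T_{\max}}{2a}\Big(a-d+\sqrt{(a-d)^2+\tfrac{4as}{T_{\max}}}\Big),\qquad R_0=\frac{1}{\mu}\Big[\frac{bpT_0}{c}+a\Big(1-\frac{T_0}{T_{\max}}\Big)\Big], \] and let $E_1=(T_0,0,0)$ be the infection-free equilibrium. If $R_0>1$, then the characteristic equation of the linearization at $E_1$ has a positive real root, so $E_1$ is unstable; if $R_0<1$, then $E_1$ is locally asymptotically stable for every $\tau\ge0$.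
   Context: $E_1$ is a constant solution of the system. Local stability refers to the linearization of the delay system at the equilibrium. *)

theory Defs
  imports "HOL-Analysis.Analysis"
begin

text \<open>State vector (T, I, V) as real^3: component 1 = T, 2 = I, 3 = V.
  The right-hand side F(x, y) of the delay system, where x is the current state
  (T(t), I(t), V(t)) and y the delayed state (T(t-tau), I(t-tau), V(t-tau)).\<close>

definition sysF ::
  "real \<Rightarrow> real \<Rightarrow> real \<Rightarrow> real \<Rightarrow> real \<Rightarrow> real \<Rightarrow> real \<Rightarrow> real \<Rightarrow> real
   \<Rightarrow> real^3 \<Rightarrow> real^3 \<Rightarrow> real^3" where
  "sysF s d a Tmax b alpha mu p c x y =
     vector [
       s - d * x$1 + a * x$1 * (1 - (x$1 + x$2) / Tmax) - b * x$1 * x$3 / (1 + alpha * x$3),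
       b * y$1 * y$3 / (1 + alpha * y$3) + a * x$2 * (1 - (x$1 + x$2) / Tmax) - mu * x$2,
       p * x$2 - c * x$3 ]"

definition T0_of :: "real \<Rightarrow> real \<Rightarrow> real \<Rightarrow> real \<Rightarrow> real" where
  "T0_of s d a Tmax = Tmax / (2 * a) * (a - d + sqrt ((a - d)^2 + 4 * a * s / Tmax))"

definition R0_of ::
  "real \<Rightarrow> real \<Rightarrow> real \<Rightarrow> real \<Rightarrow> real \<Rightarrow> real \<Rightarrow> real \<Rightarrow> real \<Rightarrow> real" where
  "R0_of s d a Tmax b mu p c =
     (1 / mu) * (b * p * T0_of s d a Tmax / c + a * (1 - T0_of s d a Tmax / Tmax))"

definition E1_of :: "real \<Rightarrow> real \<Rightarrow> real \<Rightarrow> real \<Rightarrow> real^3" where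
  "E1_of s d a Tmax = vector [T0_of s d a Tmax, 0, 0]"

definition pderiv3 :: "(real^3 \<Rightarrow> real) \<Rightarrow> real^3 \<Rightarrow> 3 \<Rightarrow> real" where
  "pderiv3 f x0 k = deriv (\<lambda>h. f (x0 + h *\<^sub>R axis k 1)) 0"

text \<open>Linearization at E1: x'(t) = A0 x(t) + A1 x(t - tau), with
  A0 = D_x F(E1,E1) and A1 = D_y F(E1,E1).\<close>
definition linA0 ::
  "real \<Rightarrow> real \<Rightarrow> real \<Rightarrow> real \<Rightarrow> real \<Rightarrow> real \<Rightarrow> real \<Rightarrow> real \<Rightarrow> real \<Rightarrow> real^3^3" where
  "linA0 s d a Tmax b alpha mu p c =
     (\<chi> i j. pderiv3 (\<lambda>x. sysF s d a Tmax b alpha mu p c x (E1_of s d a Tmax) $ i)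
                      (E1_of s d a Tmax) j)"

definition linA1 ::
  "real \<Rightarrow> real \<Rightarrow> real \<Rightarrow> real \<Rightarrow> real \<Rightarrow> real \<Rightarrow> real \<Rightarrow> real \<Rightarrow> real \<Rightarrow> real^3^3" where
  "linA1 s d a Tmax b alpha mu p c =
     (\<chi> i j. pderiv3 (\<lambda>y. sysF s d a Tmax b alpha mu p c (E1_of s d a Tmax) y $ i)
                      (E1_of s d a Tmax) j)"

definition charE1 ::
  "real \<Rightarrow> real \<Rightarrow> real \<Rightarrow> real \<Rightarrow> real \<Rightarrow> real \<Rightarrow> real \<Rightarrow> real \<Rightarrow> real \<Rightarrow> real
   \<Rightarrow> complex \<Rightarrow> complex" where
  "charE1 s d a Tmax b alpha mu p c tau z =
     det (\<chi> i j. (if i = j then z else 0)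
                 - complex_of_real (linA0 s d a Tmax b alpha mu p c $ i $ j)
                 - exp (- z * complex_of_real tau) * complex_of_real (linA1 s d a Tmax b alpha mu p c $ i $ j)
          :: complex^3^3)"

definition E1_locally_asymptotically_stable ::
  "real \<Rightarrow> real \<Rightarrow> real \<Rightarrow> real \<Rightarrow> real \<Rightarrow> real \<Rightarrow> real \<Rightarrow> real \<Rightarrow> real \<Rightarrow> real \<Rightarrow> bool" where
  "E1_locally_asymptotically_stable s d a Tmax b alpha mu p c tau \<longleftrightarrow>
     (\<forall>z. charE1 s d a Tmax b alpha mu p c tau z = 0 \<longrightarrow> Re z < 0)"

end

theory Submission imports Defs begin
lemma pd: "((\<lambda>h. f (x0 + h *\<^sub>R axis k 1)) has_real_derivative D) (at 0) \<Longrightarrow> pderiv3 f x0 k = D"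
  by (simp add: pderiv3_def DERIV_imp_deriv)

lemma A0: assumes "Tmax \<noteq> 0" shows "linA0 s d a Tmax b alpha mu p c = (let T0 = T0_of s d a Tmax in
   vector [vector [-d + a*(1 - 2*T0/Tmax), -a*T0/Tmax, -b*T0],
           vector [0, a*(1-T0/Tmax) - mu, 0],
           vector [0, p, -c]])"
  unfolding vec_eq_iff forall_3 Let_def linA0_def
  by (simp, intro conjI; rule pd; simp add: sysF_def E1_of_def axis_def; 
      auto intro!: derivative_eq_intros simp: field_simps assms)

lemma A1: assumes "Tmax \<noteq> 0" shows "linA1 s d a Tmax b alpha mu p c = (let T0 = T0_of s d a Tmax in
   vector [vector [0, 0, 0],
           vector [0, 0, b*T0],
           vector [0, 0, 0]])"
  unfolding vec_eq_iff forall_3 Let_def linA1_def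
  by (simp, intro conjI; rule pd; simp add: sysF_def E1_of_def axis_def; 
      auto intro!: derivative_eq_intros simp: field_simps assms)

lemma charE1: fixes z :: complex assumes "Tmax \<noteq> 0" shows "charE1 s d a Tmax b alpha mu p c tau z = 
  (z - of_real (-d + a*(1 - 2*T0_of s d a Tmax/Tmax))) * ((z - of_real (a*(1-T0_of s d a Tmax/Tmax) - mu)) * (z + of_real c) 
    - of_real (p * b * T0_of s d a Tmax) * exp (- z * of_real tau))"
  unfolding charE1_def A0[OF assms] A1[OF assms] det_3 Let_def
  using assms by (simp add: field_simps)

theorem mainTheorem3:
  fixes s d a Tmax b alpha mu p c tau :: real
  assumes "s > 0" "d > 0" "a > 0" "Tmax > 0" "b > 0" "alpha > 0" "mu > 0" "p > 0" "c > 0"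
    and "tau \<ge> 0"
  shows "(R0_of s d a Tmax b mu p c > 1 \<longrightarrow>
            (\<exists>r::real. r > 0 \<and> charE1 s d a Tmax b alpha mu p c tau (complex_of_real r) = 0))
       \<and> (R0_of s d a Tmax b mu p c < 1 \<longrightarrow>
            (\<forall>tau'\<ge>0. E1_locally_asymptotically_stable s d a Tmax b alpha mu p c tau'))"
proof -
  define T0 where "T0 = T0_of s d a Tmax"
  define S where "S = sqrt ((a - d)^2 + 4 * a * s / Tmax)"
  define m1 where "m1 = -d + a*(1 - 2*T0/Tmax)"
  define k where "k = a*(1-T0/Tmax) - mu"
  define q where "q = p * b * T0"
  have Tn: "Tmax \<noteq> 0" using assms by simp
  have pos: "4 * a * s / Tmax > 0" using assms by simp
  have "S > \<bar>a - d\<bar>" unfolding S_def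
    by (metis pos abs_ge_zero add.commute less_add_same_cancel2 real_sqrt_abs real_sqrt_less_iff
        power2_abs power2_less_eq_zero_iff le_less_trans order.strict_iff_not zero_le_power2 real_sqrt_gt_zero)
  hence S: "a - d + S > 0" "S > 0" by linarith+
  have T0eq: "T0 = Tmax / (2*a) * (a - d + S)" unfolding T0_def T0_of_def S_def by simp
  have T0p: "T0 > 0" unfolding T0eq using S assms by simp
  have "m1 = -S" unfolding m1_def T0eq using assms by (simp add: field_simps)
  hence m1n: "m1 < 0" using S by simp
  have qp: "q > 0" unfolding q_def using T0p assms by simp
  have R0: "R0_of s d a Tmax b mu p c = (q/c + k + mu) / mu"
    unfolding R0_of_def q_def k_def T0_def using assms by (simp add: field_simps)
  have ch: "\<And>z t. charE1 s d a Tmax b alpha mu p c t z =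
      (z - of_real m1) * ((z - of_real k) * (z + of_real c) - of_real q * exp (- z * of_real t))"
    unfolding charE1[OF Tn] m1_def k_def q_def T0_def by simp
  show ?thesis
  proof (intro conjI impI allI)
    assume "R0_of s d a Tmax b mu p c > 1"
    hence "q/c + k > 0" unfolding R0 using assms by (simp add: field_simps)
    hence kc: "q + k*c > 0" using assms by (simp add: field_simps)
    define g where "g r = (r - k) * (r + c) - q * exp (- r * tau)" for r
    define R where "R = \<bar>k\<bar> + c + q + 1"
    have g0: "g 0 < 0" unfolding g_def using kc by (simp add: algebra_simps)
    have "(R - k) * (R + c) \<ge> 1 * (q + 1)"
      by (rule mult_mono) (use assms qp in \<open>auto simp: R_def\<close>)
    moreover have "q * exp (- R * tau) \<le> q * 1"
      using qp assms by (intro mult_left_mono) (auto simp: R_def intro!: mult_nonpos_nonneg)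
    ultimately have gR: "g R \<ge> 0" unfolding g_def by simp
    have "R \<ge> 0" unfolding R_def using qp assms by simp
    from IVT[of g 0 0 R, OF less_imp_le[OF g0] gR this]
    obtain r where r: "r \<ge> 0" "r \<le> R" "g r = 0"
      unfolding g_def by (auto intro!: continuous_intros)
    have "r \<noteq> 0" using r g0 by auto
    hence "r > 0" using r by simp
    moreover have "charE1 s d a Tmax b alpha mu p c tau (complex_of_real r) = 0"
    proof -
      have e: "exp (- complex_of_real r * complex_of_real tau) = complex_of_real (exp (- r * tau))"
        by (metis exp_of_real of_real_minus of_real_mult)
      have "(complex_of_real r - of_real k) * (of_real r + of_real c) - of_real q * exp (- complex_of_real r * of_real tau)
            = complex_of_real (g r)" unfolding e g_def by simp
      thus ?thesis unfolding ch using r(3) by simp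
    qed
    ultimately show "\<exists>r::real. r > 0 \<and> charE1 s d a Tmax b alpha mu p c tau (complex_of_real r) = 0"
      by blast
  next
    fix t :: real assume R1: "R0_of s d a Tmax b mu p c < 1" and t: "t \<ge> 0"
    hence "q/c + k < 0" unfolding R0 using assms by (simp add: field_simps)
    hence kc: "q + k*c < 0" using assms by (simp add: field_simps)
    have kn: "k < 0" using kc qp assms
      by (smt (verit) mult_nonneg_nonneg)
    show "E1_locally_asymptotically_stable s d a Tmax b alpha mu p c t"
      unfolding E1_locally_asymptotically_stable_def
    proof (intro allI impI, rule ccontr)
      fix z assume z0: "charE1 s d a Tmax b alpha mu p c t z = 0" and "\<not> Re z < 0"
      hence rz: "Re z \<ge> 0" by simp
      have "z \<noteq> of_real m1" using rz m1n by auto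
      hence eq: "(z - of_real k) * (z + of_real c) = of_real q * exp (- z * of_real t)"
        using z0 unfolding ch by simp
      have n1: "norm (z - of_real k) \<ge> - k"
        using complex_Re_le_cmod[of "z - of_real k"] rz by simp
      have n2: "norm (z + of_real c) \<ge> c"
        using complex_Re_le_cmod[of "z + of_real c"] rz by simp
      have "norm (exp (- z * of_real t)) \<le> 1"
        using rz t by (simp add: norm_exp_eq_Re mult_nonneg_nonneg)
      hence n3: "norm (of_real q * exp (- z * of_real t)) \<le> q"
        using qp by (simp add: norm_mult mult_left_le)
      have "(-k) * c \<le> norm (z - of_real k) * norm (z + of_real c)"
        by (rule mult_mono) (use n1 n2 kn assms in auto)
      also have "\<dots> = norm (of_real q * exp (- z * of_real t))" by (metis eq norm_mult)
      finally show False using n3 kc by (simp add: algebra_simps)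
    qed
  qed
qed
end
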